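(* Let $\mathcal{R},\mathcal{R}'$ be finite sets with $|\mathcal{R}|=|\mathcal{R}'|$, let $\mathcal{A}$ be a finite set of attributes, for each $a\in\mathcal{A}$ let $\mathcal{V}_a$ be a finite set and $\rho_a\in[0,1)$, and let $\mathcal{V}=\mathcal{V}'=\prod_{a\in\mathcal{A}}\mathcal{V}_a$. Then retention-replacement perturbation with retention probabilities $\rho_a$ is a $Pk$-anonymization for $$k=1+(|\mathcal{R}|-1)\prod_{a\in\mathcal{A}}\left(\frac{1-\rho_a}{1+(|\mathcal{V}_a|-1)\rho_a}\right)^2.$$
   Context: A table on $(\mathcal{R},\mathcal{V})$ is a map $\mathcal{R}\to\mathcal{V}$; $\mathcal{T}$, $\mathcal{T}'$ denote the sets of tables on $(\mathcal{R},\mathcal{V})$ and $(\mathcal{R}',\mathcal{V}')$. For sets $X,Y$, $X\to Y$ is the set of maps $X\to Y$. A privacy mechanism is $(\mathcal{R},\mathcal{V},\mathcal{R}',\mathcal{V}',\Pi,\Delta)$ with $\Pi$ uniformly distributed over bijections $\mathcal{R}\to\mathcal{R}'$ and $\Delta$ a random variable in $\mathcal{T}\to(\mathcal{R}\to\mathcal{V}')$; it is a privacy mechanism from $T$ to $T'$ if $T,\Pi,\Delta$ are mutually independent and $\Delta(T)=T'\circ\Pi$. Retention-replacement perturbation is the mechanism in which, for every $\tau\in\mathcal{T}$, the values $(\Delta(\tau))(r)$, $r\in\mathcal{R}$, are independent and $\Pr[(\Delta(\tau))(r)=v']=\prod_{a\in\mathcal{A}}(A_a)_{\tau(r)_a,v'_a}$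 (where $w_a$ is the $a$-component of $w$), with $(A_a)_{x,y}=\rho_a+\frac{1-\rho_a}{|\mathcal{V}_a|}$ if $x=y$ and $(A_a)_{x,y}=\frac{1-\rho_a}{|\mathcal{V}_a|}$ otherwise. $(\Delta,\tau')$ is $Pk$-anonymous if for all random variables $T,T'$ such that $\Delta$ is a privacy mechanism from $T$ to $T'$ and all $r\in\mathcal{R},r'\in\mathcal{R}'$, $\Pr[\Pi(r)=r'\mid T'=\tau']\le1/k$; $\Delta$ is a $Pk$-anonymization if $(\Delta,\tau')$ is $Pk$-anonymous for every $\tau'\in\mathcal{T}'$ for which some $\tau\in\mathcal{T}$ has $\Pr[\Delta(\tau)=\tau'\circ\Pi]\ne0$. *)

theory Defs
  imports "HOL-Probability.Probability"
begin

definition bijs :: "'r set \<Rightarrow> 'r2 set \<Rightarrow> ('r \<Rightarrow> 'r2) set" where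
  "bijs R R' = {\<pi> \<in> R \<rightarrow>\<^sub>E R'. bij_betw \<pi> R R'}"

definition tables :: "'r set \<Rightarrow> 'a set \<Rightarrow> ('a \<Rightarrow> 'v set) \<Rightarrow> ('r \<Rightarrow> 'a \<Rightarrow> 'v) set" where
  "tables R A V = R \<rightarrow>\<^sub>E (PiE A V)"

definition uniform_perm :: "'w pmf \<Rightarrow> 'r set \<Rightarrow> 'r2 set \<Rightarrow> ('w \<Rightarrow> 'r \<Rightarrow> 'r2) \<Rightarrow> bool" where
  "uniform_perm P R R' Perm \<longleftrightarrow>
     (\<forall>\<pi>\<in>bijs R R'. measure_pmf.prob P {\<omega>. Perm \<omega> = \<pi>} = 1 / real (card (bijs R R')))"

definition indep3 :: "'w pmf \<Rightarrow> ('w \<Rightarrow> 'x) \<Rightarrow> ('w \<Rightarrow> 'y) \<Rightarrow> ('w \<Rightarrow> 'z) \<Rightarrow> bool" where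
  "indep3 P X Y Z \<longleftrightarrow>
     (\<forall>SX SY SZ. measure_pmf.prob P {\<omega>. X \<omega> \<in> SX \<and> Y \<omega> \<in> SY \<and> Z \<omega> \<in> SZ}
        = measure_pmf.prob P {\<omega>. X \<omega> \<in> SX} * measure_pmf.prob P {\<omega>. Y \<omega> \<in> SY}
          * measure_pmf.prob P {\<omega>. Z \<omega> \<in> SZ})"

definition priv_mech_from ::
  "'w pmf \<Rightarrow> 'r set \<Rightarrow> 'r2 set \<Rightarrow> 'a set \<Rightarrow> ('a \<Rightarrow> 'v set) \<Rightarrow>
   ('w \<Rightarrow> 'r \<Rightarrow> 'r2) \<Rightarrow> ('w \<Rightarrow> ('r \<Rightarrow> 'a \<Rightarrow> 'v) \<Rightarrow> 'r \<Rightarrow> 'a \<Rightarrow> 'v) \<Rightarrow>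
   ('w \<Rightarrow> 'r \<Rightarrow> 'a \<Rightarrow> 'v) \<Rightarrow> ('w \<Rightarrow> 'r2 \<Rightarrow> 'a \<Rightarrow> 'v) \<Rightarrow> bool" where
  "priv_mech_from P R R' A V Perm Delta T T' \<longleftrightarrow>
     (AE \<omega> in measure_pmf P. T \<omega> \<in> tables R A V) \<and>
     (AE \<omega> in measure_pmf P. T' \<omega> \<in> tables R' A V) \<and>
     indep3 P T Perm Delta \<and>
     (AE \<omega> in measure_pmf P. \<forall>r\<in>R. Delta \<omega> (T \<omega>) r = T' \<omega> (Perm \<omega> r))"

text \<open>(Delta, tau') is Pk-anonymous. Pr[A | B] is written as Pr[A and B] / Pr[B].\<close>
definition Pk_anonymous ::
  "'w pmf \<Rightarrow> 'r set \<Rightarrow> 'r2 set \<Rightarrow> 'a set \<Rightarrow> ('a \<Rightarrow> 'v set) \<Rightarrow>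
   ('w \<Rightarrow> 'r \<Rightarrow> 'r2) \<Rightarrow> ('w \<Rightarrow> ('r \<Rightarrow> 'a \<Rightarrow> 'v) \<Rightarrow> 'r \<Rightarrow> 'a \<Rightarrow> 'v) \<Rightarrow> real \<Rightarrow>
   ('r2 \<Rightarrow> 'a \<Rightarrow> 'v) \<Rightarrow> bool" where
  "Pk_anonymous P R R' A V Perm Delta k \<tau>' \<longleftrightarrow>
     (\<forall>T T'. priv_mech_from P R R' A V Perm Delta T T' \<longrightarrow>
        (\<forall>r\<in>R. \<forall>r'\<in>R'.
           measure_pmf.prob P {\<omega>. Perm \<omega> r = r' \<and> T' \<omega> = \<tau>'}
             / measure_pmf.prob P {\<omega>. T' \<omega> = \<tau>'} \<le> 1 / k))"

definition Pk_anonymization ::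
  "'w pmf \<Rightarrow> 'r set \<Rightarrow> 'r2 set \<Rightarrow> 'a set \<Rightarrow> ('a \<Rightarrow> 'v set) \<Rightarrow>
   ('w \<Rightarrow> 'r \<Rightarrow> 'r2) \<Rightarrow> ('w \<Rightarrow> ('r \<Rightarrow> 'a \<Rightarrow> 'v) \<Rightarrow> 'r \<Rightarrow> 'a \<Rightarrow> 'v) \<Rightarrow> real \<Rightarrow> bool" where
  "Pk_anonymization P R R' A V Perm Delta k \<longleftrightarrow>
     (\<forall>\<tau>'\<in>tables R' A V.
        (\<exists>\<tau>\<in>tables R A V.
           measure_pmf.prob P {\<omega>. \<forall>r\<in>R. Delta \<omega> \<tau> r = \<tau>' (Perm \<omega> r)} \<noteq> 0)
        \<longrightarrow> Pk_anonymous P R R' A V Perm Delta k \<tau>')"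

definition rr_entry :: "('a \<Rightarrow> 'v set) \<Rightarrow> ('a \<Rightarrow> real) \<Rightarrow> 'a \<Rightarrow> 'v \<Rightarrow> 'v \<Rightarrow> real" where
  "rr_entry V \<rho> a x y =
     (if x = y then \<rho> a + (1 - \<rho> a) / real (card (V a)) else (1 - \<rho> a) / real (card (V a)))"

definition is_rrp ::
  "'w pmf \<Rightarrow> 'r set \<Rightarrow> 'a set \<Rightarrow> ('a \<Rightarrow> 'v set) \<Rightarrow> ('a \<Rightarrow> real) \<Rightarrow>
   ('w \<Rightarrow> ('r \<Rightarrow> 'a \<Rightarrow> 'v) \<Rightarrow> 'r \<Rightarrow> 'a \<Rightarrow> 'v) \<Rightarrow> bool" where
  "is_rrp P R A V \<rho> Delta \<longleftrightarrow>
     (\<forall>\<tau>\<in>tables R A V.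
        prob_space.indep_vars (measure_pmf P) (\<lambda>_. count_space UNIV) (\<lambda>r \<omega>. Delta \<omega> \<tau> r) R \<and>
        (\<forall>r\<in>R. \<forall>v'\<in>PiE A V.
           measure_pmf.prob P {\<omega>. Delta \<omega> \<tau> r = v'} = (\<Prod>a\<in>A. rr_entry V \<rho> a (\<tau> r a) (v' a))))"

end

theory Submission
  imports Defs
begin

lemma pmf_decomp:
  fixes P :: "'w pmf" and X :: "'w \<Rightarrow> 'x"
  assumes "finite F" "\<And>\<omega>. \<omega> \<in> set_pmf P \<Longrightarrow> \<omega> \<in> S \<Longrightarrow> X \<omega> \<in> F"
  shows "measure_pmf.prob P S = (\<Sum>x\<in>F. measure_pmf.prob P (S \<inter> {\<omega>. X \<omega> = x}))"
proof -
  have "(\<Sum>x\<in>F. measure_pmf.prob P (S \<inter> {\<omega>. X \<omega> = x})) = measure_pmf.prob P (\<Union>x\<in>F. S \<inter> {\<omega>. X \<omega> = x})"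
    by (rule measure_pmf.finite_measure_finite_Union[symmetric]) (auto simp: assms disjoint_family_on_def)
  also have "\<dots> = measure_pmf.prob P ((\<Union>x\<in>F. S \<inter> {\<omega>. X \<omega> = x}) \<inter> set_pmf P)" by (simp add: measure_Int_set_pmf)
  also have "(\<Union>x\<in>F. S \<inter> {\<omega>. X \<omega> = x}) \<inter> set_pmf P = S \<inter> set_pmf P" using assms(2) by auto
  also have "measure_pmf.prob P \<dots> = measure_pmf.prob P S" by (simp add: measure_Int_set_pmf)
  finally show ?thesis ..
qed

definition sw :: "'r \<Rightarrow> 'r \<Rightarrow> 'r \<Rightarrow> 'r" where
  "sw r t x = (if x = r then t else if x = t then r else x)"

lemma sw_sw[simp]: "sw r t (sw r t x) = x" by (auto simp: sw_def)

lemma sw_bij: "r \<in> R \<Longrightarrow> t \<in> R \<Longrightarrow> bij_betw (sw r t) R R"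
  by (rule bij_betw_byWitness[where f'="sw r t"]) (auto simp: sw_def)

lemma comp_sw_bijs:
  assumes "\<pi> \<in> bijs R R'" "r \<in> R" "t \<in> R"
  shows "\<pi> \<circ> sw r t \<in> bijs R R'"
  using assms unfolding bijs_def
  apply (auto simp: PiE_def extensional_def sw_def intro!: bij_betw_trans[OF sw_bij])
  done

lemma finite_bijs: "finite R \<Longrightarrow> finite R' \<Longrightarrow> finite (bijs R R')"
  unfolding bijs_def by (rule finite_subset[OF _ finite_PiE[of R "\<lambda>_. R'"]]) auto

lemma comb_bound:
  fixes w :: "'r \<Rightarrow> 'r2 \<Rightarrow> real"
  assumes fin: "finite R" "finite R'" and r: "r \<in> R" and r': "r' \<in> R'"
    and wpos: "\<And>s x. s \<in> R \<Longrightarrow> x \<in> R' \<Longrightarrow> 0 \<le> w s x" and c: "0 \<le> c"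
    and key: "\<And>s t x y. s \<in> R \<Longrightarrow> t \<in> R \<Longrightarrow> x \<in> R' \<Longrightarrow> y \<in> R' \<Longrightarrow>
                c * (w s x * w t y) \<le> w s y * w t x"
  shows "(1 + (real (card R) - 1) * c) * (\<Sum>\<pi>\<in>{\<pi>\<in>bijs R R'. \<pi> r = r'}. \<Prod>s\<in>R. w s (\<pi> s))
          \<le> (\<Sum>\<pi>\<in>bijs R R'. \<Prod>s\<in>R. w s (\<pi> s))"
proof -
  define B where "B = bijs R R'"
  define Bt where "Bt t = {\<pi>\<in>B. \<pi> t = r'}" for t
  define Q where "Q \<pi> = (\<Prod>s\<in>R. w s (\<pi> s))" for \<pi> :: "'r \<Rightarrow> 'r2"
  have finB: "finite B" using finite_bijs[OF fin] by (simp add: B_def)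
  have Qnn: "0 \<le> Q \<pi>" if "\<pi> \<in> B" for \<pi>
    using that wpos unfolding Q_def B_def bijs_def by (auto intro!: prod_nonneg)
  have split: "sum Q B = (\<Sum>t\<in>R. sum Q (Bt t))"
  proof -
    have "(\<Sum>t\<in>R. sum Q {\<pi>. \<pi> \<in> B \<and> inv_into R \<pi> r' = t}) = sum Q B"
    proof (rule sum.group[OF finB fin(1)])
      show "(\<lambda>\<pi>. inv_into R \<pi> r') ` B \<subseteq> R"
        using r' by (auto simp: B_def bijs_def bij_betw_def intro!: inv_into_into)
    qed
    moreover have "{\<pi>. \<pi> \<in> B \<and> inv_into R \<pi> r' = t} = Bt t" if "t \<in> R" for t
      using that r' unfolding Bt_def B_def bijs_def bij_betw_def
      by (auto intro: inv_into_f_eq f_inv_into_f)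
    ultimately show ?thesis by (metis (no_types, lifting) sum.cong)
  qed
  have step: "c * sum Q (Bt r) \<le> sum Q (Bt t)" if t: "t \<in> R" "t \<noteq> r" for t
  proof -
    have bb: "bij_betw (\<lambda>\<pi>. \<pi> \<circ> sw r t) (Bt r) (Bt t)"
      by (rule bij_betw_byWitness[where f'="\<lambda>\<pi>. \<pi> \<circ> sw r t"])
         (auto simp: Bt_def B_def comp_sw_bijs r t fun_eq_iff sw_def)
    have "sum Q (Bt t) = sum (\<lambda>\<pi>. Q (\<pi> \<circ> sw r t)) (Bt r)"
      using sum.reindex_bij_betw[OF bb, of Q] by simp
    moreover have "c * Q \<pi> \<le> Q (\<pi> \<circ> sw r t)" if \<pi>: "\<pi> \<in> Bt r" for \<pi>
    proof -
      have \<pi>B: "\<pi> \<in> B" using \<pi> by (simp add: Bt_def)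
      hence \<pi>R: "\<And>s. s \<in> R \<Longrightarrow> \<pi> s \<in> R'" by (auto simp: B_def bijs_def)
      define M where "M = (\<Prod>s\<in>R-{r}-{t}. w s (\<pi> s))"
      have Mnn: "0 \<le> M" unfolding M_def using \<pi>R wpos by (auto intro!: prod_nonneg)
      have q1: "Q \<pi> = w r (\<pi> r) * (w t (\<pi> t) * M)"
        unfolding Q_def M_def using fin r t
        by (simp add: prod.remove[of R r] prod.remove[of "R-{r}" t])
      have q2: "Q (\<pi> \<circ> sw r t) = w r (\<pi> t) * (w t (\<pi> r) * M)"
      proof -
        have "Q (\<pi> \<circ> sw r t) = w r (\<pi> t) * (w t (\<pi> r) * (\<Prod>s\<in>R-{r}-{t}. w s (\<pi> (sw r t s))))"
          unfolding Q_def using fin r t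
          by (simp add: prod.remove[of R r] prod.remove[of "R-{r}" t] sw_def)
        moreover have "(\<Prod>s\<in>R-{r}-{t}. w s (\<pi> (sw r t s))) = M"
          unfolding M_def by (rule prod.cong) (auto simp: sw_def)
        ultimately show ?thesis by simp
      qed
      have "c * (w r (\<pi> r) * w t (\<pi> t)) \<le> w r (\<pi> t) * w t (\<pi> r)"
        using key r t \<pi>R by blast
      hence "c * (w r (\<pi> r) * w t (\<pi> t)) * M \<le> w r (\<pi> t) * w t (\<pi> r) * M"
        using Mnn by (rule mult_right_mono)
      thus ?thesis using q1 q2 by (simp add: algebra_simps)
    qed
    hence "c * sum Q (Bt r) \<le> sum (\<lambda>\<pi>. Q (\<pi> \<circ> sw r t)) (Bt r)"
      by (simp add: sum_distrib_left sum_mono)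
    ultimately show ?thesis by simp
  qed
  have e1: "sum Q B = sum Q (Bt r) + (\<Sum>t\<in>R-{r}. sum Q (Bt t))"
    using split fin r by (simp add: sum.remove)
  have e2: "(\<Sum>t\<in>R-{r}. c * sum Q (Bt r)) \<le> (\<Sum>t\<in>R-{r}. sum Q (Bt t))"
    by (rule sum_mono) (use step in auto)
  have e3: "(\<Sum>t\<in>R-{r}. c * sum Q (Bt r)) = (real (card R) - 1) * c * sum Q (Bt r)"
  proof -
    have "card R \<ge> 1" using fin r by (metis One_nat_def Suc_leI card_gt_0_iff empty_iff)
    thus ?thesis using fin r by (simp add: card_Diff_singleton of_nat_diff)
  qed
  have "(1 + (real (card R) - 1) * c) * sum Q (Bt r) \<le> sum Q B"
    using e1 e2 e3 by (simp add: algebra_simps)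
  thus ?thesis by (simp add: Q_def Bt_def B_def)
qed

lemma rr_bounds:
  assumes fA: "finite A" and V: "\<forall>a\<in>A. finite (V a) \<and> V a \<noteq> {}"
    and rho: "\<forall>a\<in>A. 0 \<le> \<rho> a \<and> \<rho> a < 1"
  shows "(\<Prod>a\<in>A. (1 - \<rho> a) / real (card (V a))) \<le> (\<Prod>a\<in>A. rr_entry V \<rho> a (x a) (y a))"
    and "(\<Prod>a\<in>A. rr_entry V \<rho> a (x a) (y a)) \<le> (\<Prod>a\<in>A. \<rho> a + (1 - \<rho> a) / real (card (V a)))"
    and "0 < (\<Prod>a\<in>A. (1 - \<rho> a) / real (card (V a)))"
    and "(\<Prod>a\<in>A. ((1 - \<rho> a) / (1 + (real (card (V a)) - 1) * \<rho> a)) ^ 2)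
          * (\<Prod>a\<in>A. \<rho> a + (1 - \<rho> a) / real (card (V a))) ^ 2
         = (\<Prod>a\<in>A. (1 - \<rho> a) / real (card (V a))) ^ 2"
proof -
  have m: "real (card (V a)) > 0" if "a \<in> A" for a using V that by (simp add: card_gt_0_iff)
  show "(\<Prod>a\<in>A. (1 - \<rho> a) / real (card (V a))) \<le> (\<Prod>a\<in>A. rr_entry V \<rho> a (x a) (y a))"
    by (rule prod_mono) (use m rho in \<open>auto simp: rr_entry_def\<close>)
  show "(\<Prod>a\<in>A. rr_entry V \<rho> a (x a) (y a)) \<le> (\<Prod>a\<in>A. \<rho> a + (1 - \<rho> a) / real (card (V a)))"
    by (rule prod_mono) (use m rho in \<open>auto simp: rr_entry_def\<close>)
  show "0 < (\<Prod>a\<in>A. (1 - \<rho> a) / real (card (V a)))"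
    by (rule prod_pos) (use m rho in auto)
  have per: "((1 - \<rho> a) / (1 + (real (card (V a)) - 1) * \<rho> a)) * (\<rho> a + (1 - \<rho> a) / real (card (V a)))
        = (1 - \<rho> a) / real (card (V a))" if a: "a \<in> A" for a
  proof -
    have mm: "real (card (V a)) > 0" using m a .
    have m1: "real (card (V a)) \<ge> 1" using mm by (simp add: Suc_leI)
    have r0: "\<rho> a \<ge> 0" using rho a by auto
    have "(real (card (V a)) - 1) * \<rho> a \<ge> 0" using m1 r0 by simp
    hence pos: "1 + (real (card (V a)) - 1) * \<rho> a > 0" by linarith
    have "\<rho> a + (1 - \<rho> a) / real (card (V a)) = (1 + (real (card (V a)) - 1) * \<rho> a) / real (card (V a))"
      using mm by (simp add: field_simps)
    thus ?thesis using pos mm by simp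
  qed
  have "(\<Prod>a\<in>A. ((1 - \<rho> a) / (1 + (real (card (V a)) - 1) * \<rho> a)) ^ 2)
          * (\<Prod>a\<in>A. \<rho> a + (1 - \<rho> a) / real (card (V a))) ^ 2
       = ((\<Prod>a\<in>A. ((1 - \<rho> a) / (1 + (real (card (V a)) - 1) * \<rho> a)))
          * (\<Prod>a\<in>A. \<rho> a + (1 - \<rho> a) / real (card (V a)))) ^ 2"
    by (simp add: power_mult_distrib prod_power_distrib)
  also have "(\<Prod>a\<in>A. ((1 - \<rho> a) / (1 + (real (card (V a)) - 1) * \<rho> a)))
          * (\<Prod>a\<in>A. \<rho> a + (1 - \<rho> a) / real (card (V a)))
        = (\<Prod>a\<in>A. (1 - \<rho> a) / real (card (V a)))"
    unfolding prod.distrib[symmetric] by (rule prod.cong[OF refl], rule per)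
  finally show "(\<Prod>a\<in>A. ((1 - \<rho> a) / (1 + (real (card (V a)) - 1) * \<rho> a)) ^ 2)
          * (\<Prod>a\<in>A. \<rho> a + (1 - \<rho> a) / real (card (V a))) ^ 2
         = (\<Prod>a\<in>A. (1 - \<rho> a) / real (card (V a))) ^ 2" .
qed


theorem corollary5:
  fixes P :: "'w pmf" and R :: "'r set" and R' :: "'r2 set" and A :: "'a set"
    and V :: "'a \<Rightarrow> 'v set" and \<rho> :: "'a \<Rightarrow> real"
    and Perm :: "'w \<Rightarrow> 'r \<Rightarrow> 'r2"
    and Delta :: "'w \<Rightarrow> ('r \<Rightarrow> 'a \<Rightarrow> 'v) \<Rightarrow> 'r \<Rightarrow> 'a \<Rightarrow> 'v"
  assumes "finite R" and "finite R'" and "card R = card R'"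
    and "finite A"
    and "\<forall>a\<in>A. finite (V a)"
    and "\<forall>a\<in>A. 0 \<le> \<rho> a \<and> \<rho> a < 1"
    and "uniform_perm P R R' Perm"
    and "is_rrp P R A V \<rho> Delta"
  shows "Pk_anonymization P R R' A V Perm Delta
           (1 + (real (card R) - 1) *
              (\<Prod>a\<in>A. ((1 - \<rho> a) / (1 + (real (card (V a)) - 1) * \<rho> a)) ^ 2))"
proof -
  note finR = assms(1) and finR' = assms(2) and cardR = assms(3) and finA = assms(4)
    and finV = assms(5) and rho = assms(6) and unif = assms(7) and rrp = assms(8)
  define c where "c = (\<Prod>a\<in>A. ((1 - \<rho> a) / (1 + (real (card (V a)) - 1) * \<rho> a)) ^ 2)"
  define k where "k = 1 + (real (card R) - 1) * c"
  have c0: "0 \<le> c" unfolding c_def by (rule prod_nonneg) auto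
  define B where "B = bijs R R'"
  define N where "N = card B"
  have finB: "finite B" unfolding B_def using finite_bijs[OF finR finR'] .
  obtain h where h: "bij_betw h R R'" using finite_same_card_bij[OF finR finR' cardR] by blast
  have "restrict h R \<in> B" unfolding B_def bijs_def using h by (auto simp: bij_betw_def)
  hence Bne: "B \<noteq> {}" by auto
  hence Npos: "N > 0" unfolding N_def using finB by (simp add: card_gt_0_iff)
  have uP: "measure_pmf.prob P {\<omega>. Perm \<omega> = \<pi>} = 1 / real N" if "\<pi> \<in> B" for \<pi>
    using unif that unfolding uniform_perm_def B_def N_def by auto
  have PermB: "Perm \<omega> \<in> B" if \<omega>: "\<omega> \<in> set_pmf P" for \<omega>
  proof (rule ccontr)
    assume nB: "Perm \<omega> \<notin> B"
    have "measure_pmf.prob P {\<omega>. Perm \<omega> \<in> B} = (\<Sum>\<pi>\<in>B. measure_pmf.prob P ({\<omega>. Perm \<omega> \<in> B} \<inter> {\<omega>. Perm \<omega> = \<pi>}))"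
      by (rule pmf_decomp[OF finB]) auto
    also have "\<dots> = (\<Sum>\<pi>\<in>B. 1 / real N)"
    proof (rule sum.cong[OF refl])
      fix \<pi> assume "\<pi> \<in> B"
      hence "{\<omega>. Perm \<omega> \<in> B} \<inter> {\<omega>. Perm \<omega> = \<pi>} = {\<omega>. Perm \<omega> = \<pi>}" by auto
      thus "measure_pmf.prob P ({\<omega>. Perm \<omega> \<in> B} \<inter> {\<omega>. Perm \<omega> = \<pi>}) = 1 / real N"
        using uP \<open>\<pi> \<in> B\<close> by simp
    qed
    also have "\<dots> = 1" using Npos by (simp add: N_def)
    finally have p1: "measure_pmf.prob P {\<omega>. Perm \<omega> \<in> B} = 1" .
    have "measure_pmf.prob P (UNIV - {\<omega>. Perm \<omega> \<in> B}) = 1 - measure_pmf.prob P {\<omega>. Perm \<omega> \<in> B}"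
      using measure_pmf.prob_compl[of "{\<omega>. Perm \<omega> \<in> B}" P] by simp
    hence p0: "measure_pmf.prob P (UNIV - {\<omega>. Perm \<omega> \<in> B}) = 0" using p1 by simp
    have "pmf P \<omega> \<le> measure_pmf.prob P (UNIV - {\<omega>. Perm \<omega> \<in> B})"
      unfolding measure_pmf_single[symmetric] using nB by (intro measure_pmf.finite_measure_mono) auto
    with pmf_positive[OF \<omega>] p0 show False by simp
  qed
  show ?thesis
    unfolding Pk_anonymization_def Pk_anonymous_def c_def[symmetric] k_def[symmetric]
  proof (intro ballI impI allI)
    fix \<tau>' T T' r r'
    assume \<tau>': "\<tau>' \<in> tables R' A V" and pm: "priv_mech_from P R R' A V Perm Delta T T'"
      and r: "r \<in> R" and r': "r' \<in> R'"
    have Tt: "\<And>\<omega>. \<omega> \<in> set_pmf P \<Longrightarrow> T \<omega> \<in> tables R A V"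
      and T't: "\<And>\<omega>. \<omega> \<in> set_pmf P \<Longrightarrow> T' \<omega> \<in> tables R' A V"
      and ind: "indep3 P T Perm Delta"
      and DT: "\<And>\<omega> s. \<omega> \<in> set_pmf P \<Longrightarrow> s \<in> R \<Longrightarrow> Delta \<omega> (T \<omega>) s = T' \<omega> (Perm \<omega> s)"
      using pm unfolding priv_mech_from_def AE_measure_pmf_iff by auto
    obtain \<omega>0 where \<omega>0: "\<omega>0 \<in> set_pmf P" using set_pmf_not_empty[of P] by blast
    have Vne: "\<forall>a\<in>A. finite (V a) \<and> V a \<noteq> {}"
    proof
      fix a assume a: "a \<in> A"
      have "T \<omega>0 r \<in> PiE A V" using Tt[OF \<omega>0] r unfolding tables_def by auto
      hence "T \<omega>0 r a \<in> V a" using a by auto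
      thus "finite (V a) \<and> V a \<noteq> {}" using finV a by auto
    qed
    have k1: "k \<ge> 1"
    proof -
      have "card R \<ge> 1" using finR r by (metis One_nat_def Suc_leI card_gt_0_iff empty_iff)
      hence "real (card R) - 1 \<ge> 0" by simp
      thus ?thesis unfolding k_def using c0 by simp
    qed
    have finT: "finite (tables R A V)"
      unfolding tables_def using finR finA finV by (intro finite_PiE finite_PiE) auto
    define w where "w \<tau> s x = measure_pmf.prob P {\<omega>. Delta \<omega> \<tau> s = \<tau>' x}" for \<tau> s x
    define G where "G \<tau> \<pi> = measure_pmf.prob P {\<omega>. T \<omega> = \<tau> \<and> Perm \<omega> = \<pi> \<and> (\<forall>s\<in>R. Delta \<omega> \<tau> s = \<tau>' (\<pi> s))}" for \<tau> \<pi>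
    define pT where "pT \<tau> = measure_pmf.prob P {\<omega>. T \<omega> = \<tau>}" for \<tau>
    have fact: "G \<tau> \<pi> = pT \<tau> * (1 / real N) * (\<Prod>s\<in>R. w \<tau> s (\<pi> s))"
      if \<tau>: "\<tau> \<in> tables R A V" and \<pi>: "\<pi> \<in> B" for \<tau> \<pi>
    proof -
      have "measure_pmf.prob P {\<omega>. T \<omega> \<in> {\<tau>} \<and> Perm \<omega> \<in> {\<pi>} \<and> Delta \<omega> \<in> {d. \<forall>s\<in>R. d \<tau> s = \<tau>' (\<pi> s)}}
          = measure_pmf.prob P {\<omega>. T \<omega> \<in> {\<tau>}} * measure_pmf.prob P {\<omega>. Perm \<omega> \<in> {\<pi>}}
            * measure_pmf.prob P {\<omega>. Delta \<omega> \<in> {d. \<forall>s\<in>R. d \<tau> s = \<tau>' (\<pi> s)}}"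
        using ind unfolding indep3_def by blast
      hence g1: "G \<tau> \<pi> = pT \<tau> * (1 / real N) * measure_pmf.prob P {\<omega>. \<forall>s\<in>R. Delta \<omega> \<tau> s = \<tau>' (\<pi> s)}"
        using uP[OF \<pi>] unfolding G_def pT_def by simp
      have iv: "prob_space.indep_vars (measure_pmf P) (\<lambda>_. count_space UNIV) (\<lambda>r \<omega>. Delta \<omega> \<tau> r) R"
        using rrp \<tau> unfolding is_rrp_def by auto
      have Rne: "R \<noteq> {}" using r by auto
      have "measure_pmf.prob P (\<Inter>s\<in>R. (\<lambda>\<omega>. Delta \<omega> \<tau> s) -` {\<tau>' (\<pi> s)} \<inter> space (measure_pmf P))
          = (\<Prod>s\<in>R. measure_pmf.prob P ((\<lambda>\<omega>. Delta \<omega> \<tau> s) -` {\<tau>' (\<pi> s)} \<inter> space (measure_pmf P)))"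
        by (rule prob_space.indep_varsD_finite[OF measure_pmf.prob_space_axioms iv Rne finR]) auto
      moreover have "(\<Inter>s\<in>R. (\<lambda>\<omega>. Delta \<omega> \<tau> s) -` {\<tau>' (\<pi> s)} \<inter> space (measure_pmf P))
          = {\<omega>. \<forall>s\<in>R. Delta \<omega> \<tau> s = \<tau>' (\<pi> s)}" using Rne by auto
      moreover have "\<And>s. (\<lambda>\<omega>. Delta \<omega> \<tau> s) -` {\<tau>' (\<pi> s)} \<inter> space (measure_pmf P)
          = {\<omega>. Delta \<omega> \<tau> s = \<tau>' (\<pi> s)}" by auto
      ultimately have "measure_pmf.prob P {\<omega>. \<forall>s\<in>R. Delta \<omega> \<tau> s = \<tau>' (\<pi> s)} = (\<Prod>s\<in>R. w \<tau> s (\<pi> s))"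
        unfolding w_def by simp
      with g1 show ?thesis by simp
    qed
    have dec: "measure_pmf.prob P {\<omega>. Perm \<omega> \<in> B' \<and> T' \<omega> = \<tau>'} = (\<Sum>\<tau>\<in>tables R A V. \<Sum>\<pi>\<in>B'. G \<tau> \<pi>)"
      if B': "B' \<subseteq> B" for B'
    proof -
      let ?S = "{\<omega>. Perm \<omega> \<in> B' \<and> T' \<omega> = \<tau>'}"
      have finB': "finite B'" using finB B' by (rule finite_subset[rotated])
      have "measure_pmf.prob P ?S = (\<Sum>x\<in>tables R A V \<times> B'. measure_pmf.prob P (?S \<inter> {\<omega>. (T \<omega>, Perm \<omega>) = x}))"
        by (rule pmf_decomp) (use finT finB' Tt in auto)
      also have "\<dots> = (\<Sum>(\<tau>,\<pi>)\<in>tables R A V \<times> B'. G \<tau> \<pi>)"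
      proof (rule sum.cong[OF refl], clarify)
        fix \<tau> \<pi> assume \<tau>: "\<tau> \<in> tables R A V" and \<pi>B': "\<pi> \<in> B'"
        have \<pi>: "\<pi> \<in> B" using \<pi>B' B' by auto
        have eq: "?S \<inter> {\<omega>. (T \<omega>, Perm \<omega>) = (\<tau>, \<pi>)} \<inter> set_pmf P
            = {\<omega>. T \<omega> = \<tau> \<and> Perm \<omega> = \<pi> \<and> (\<forall>s\<in>R. Delta \<omega> \<tau> s = \<tau>' (\<pi> s))} \<inter> set_pmf P"
        proof (intro equalityI subsetI)
          fix \<omega> assume "\<omega> \<in> ?S \<inter> {\<omega>. (T \<omega>, Perm \<omega>) = (\<tau>, \<pi>)} \<inter> set_pmf P"
          thus "\<omega> \<in> {\<omega>. T \<omega> = \<tau> \<and> Perm \<omega> = \<pi> \<and> (\<forall>s\<in>R. Delta \<omega> \<tau> s = \<tau>' (\<pi> s))} \<inter> set_pmf P"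
            using DT by auto
        next
          fix \<omega> assume om: "\<omega> \<in> {\<omega>. T \<omega> = \<tau> \<and> Perm \<omega> = \<pi> \<and> (\<forall>s\<in>R. Delta \<omega> \<tau> s = \<tau>' (\<pi> s))} \<inter> set_pmf P"
          hence o: "\<omega> \<in> set_pmf P" "T \<omega> = \<tau>" "Perm \<omega> = \<pi>" "\<forall>s\<in>R. Delta \<omega> \<tau> s = \<tau>' (\<pi> s)" by auto
          have bij: "bij_betw \<pi> R R'" using \<pi> unfolding B_def bijs_def by auto
          have "T' \<omega> = \<tau>'"
          proof (rule PiE_ext)
            show "T' \<omega> \<in> R' \<rightarrow>\<^sub>E PiE A V" using T't[OF o(1)] unfolding tables_def .
            show "\<tau>' \<in> R' \<rightarrow>\<^sub>E PiE A V" using \<tau>' unfolding tables_def .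
            fix i assume i: "i \<in> R'"
            then obtain s where s: "s \<in> R" "i = \<pi> s" using bij unfolding bij_betw_def by auto
            have "T' \<omega> (\<pi> s) = Delta \<omega> \<tau> s" using DT[OF o(1) s(1)] o by simp
            also have "\<dots> = \<tau>' (\<pi> s)" using o(4) s(1) by auto
            finally show "T' \<omega> i = \<tau>' i" using s by simp
          qed
          thus "\<omega> \<in> ?S \<inter> {\<omega>. (T \<omega>, Perm \<omega>) = (\<tau>, \<pi>)} \<inter> set_pmf P" using o \<pi>B' by auto
        qed
        have "measure_pmf.prob P (?S \<inter> {\<omega>. (T \<omega>, Perm \<omega>) = (\<tau>, \<pi>)})
            = measure_pmf.prob P (?S \<inter> {\<omega>. (T \<omega>, Perm \<omega>) = (\<tau>, \<pi>)} \<inter> set_pmf P)"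
          by (rule measure_Int_set_pmf[symmetric])
        also have "\<dots> = measure_pmf.prob P ({\<omega>. T \<omega> = \<tau> \<and> Perm \<omega> = \<pi> \<and> (\<forall>s\<in>R. Delta \<omega> \<tau> s = \<tau>' (\<pi> s))} \<inter> set_pmf P)"
          by (simp only: eq)
        also have "\<dots> = G \<tau> \<pi>" unfolding G_def by (rule measure_Int_set_pmf)
        finally show "measure_pmf.prob P (?S \<inter> {\<omega>. (T \<omega>, Perm \<omega>) = (\<tau>, \<pi>)}) = G \<tau> \<pi>" .
      qed
      also have "\<dots> = (\<Sum>\<tau>\<in>tables R A V. \<Sum>\<pi>\<in>B'. G \<tau> \<pi>)"
        by (simp add: sum.cartesian_product)
      finally show ?thesis .
    qed
    define Br where "Br = {\<pi>\<in>B. \<pi> r = r'}"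
    have num: "measure_pmf.prob P {\<omega>. Perm \<omega> r = r' \<and> T' \<omega> = \<tau>'} = (\<Sum>\<tau>\<in>tables R A V. \<Sum>\<pi>\<in>Br. G \<tau> \<pi>)"
    proof -
      have "{\<omega>. Perm \<omega> r = r' \<and> T' \<omega> = \<tau>'} \<inter> set_pmf P = {\<omega>. Perm \<omega> \<in> Br \<and> T' \<omega> = \<tau>'} \<inter> set_pmf P"
        using PermB unfolding Br_def by auto
      hence "measure_pmf.prob P ({\<omega>. Perm \<omega> r = r' \<and> T' \<omega> = \<tau>'} \<inter> set_pmf P) = measure_pmf.prob P ({\<omega>. Perm \<omega> \<in> Br \<and> T' \<omega> = \<tau>'} \<inter> set_pmf P)"
        by (simp only:)
      hence "measure_pmf.prob P {\<omega>. Perm \<omega> r = r' \<and> T' \<omega> = \<tau>'} = measure_pmf.prob P {\<omega>. Perm \<omega> \<in> Br \<and> T' \<omega> = \<tau>'}"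
        by (simp only: measure_Int_set_pmf)
      also have "\<dots> = (\<Sum>\<tau>\<in>tables R A V. \<Sum>\<pi>\<in>Br. G \<tau> \<pi>)" by (rule dec) (auto simp: Br_def)
      finally show ?thesis .
    qed
    have den: "measure_pmf.prob P {\<omega>. T' \<omega> = \<tau>'} = (\<Sum>\<tau>\<in>tables R A V. \<Sum>\<pi>\<in>B. G \<tau> \<pi>)"
    proof -
      have "{\<omega>. T' \<omega> = \<tau>'} \<inter> set_pmf P = {\<omega>. Perm \<omega> \<in> B \<and> T' \<omega> = \<tau>'} \<inter> set_pmf P"
        using PermB by auto
      hence "measure_pmf.prob P ({\<omega>. T' \<omega> = \<tau>'} \<inter> set_pmf P) = measure_pmf.prob P ({\<omega>. Perm \<omega> \<in> B \<and> T' \<omega> = \<tau>'} \<inter> set_pmf P)"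
        by (simp only:)
      hence "measure_pmf.prob P {\<omega>. T' \<omega> = \<tau>'} = measure_pmf.prob P {\<omega>. Perm \<omega> \<in> B \<and> T' \<omega> = \<tau>'}"
        by (simp only: measure_Int_set_pmf)
      also have "\<dots> = (\<Sum>\<tau>\<in>tables R A V. \<Sum>\<pi>\<in>B. G \<tau> \<pi>)" by (rule dec) auto
      finally show ?thesis .
    qed
    have per\<tau>: "k * (\<Sum>\<pi>\<in>Br. G \<tau> \<pi>) \<le> (\<Sum>\<pi>\<in>B. G \<tau> \<pi>)" if \<tau>: "\<tau> \<in> tables R A V" for \<tau>
    proof -
      define L where "L = (\<Prod>a\<in>A. (1 - \<rho> a) / real (card (V a)))"
      define U where "U = (\<Prod>a\<in>A. \<rho> a + (1 - \<rho> a) / real (card (V a)))"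
      have wf: "w \<tau> s x = (\<Prod>a\<in>A. rr_entry V \<rho> a (\<tau> s a) (\<tau>' x a))" if "s \<in> R" "x \<in> R'" for s x
      proof -
        have "\<tau>' x \<in> PiE A V" using \<tau>' that unfolding tables_def by auto
        thus ?thesis using rrp \<tau> that unfolding is_rrp_def w_def by auto
      qed
      have wL: "L \<le> w \<tau> s x" and wU: "w \<tau> s x \<le> U" if "s \<in> R" "x \<in> R'" for s x
        using wf[OF that] rr_bounds(1,2)[OF finA Vne rho, of "\<tau> s" "\<tau>' x"] unfolding L_def U_def by auto
      have L0: "0 < L" unfolding L_def by (rule rr_bounds(3)[OF finA Vne rho])
      have cUL: "c * U^2 = L^2" unfolding c_def U_def L_def by (rule rr_bounds(4)[OF finA Vne rho])
      have key: "c * (w \<tau> s x * w \<tau> t y) \<le> w \<tau> s y * w \<tau> t x"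
        if "s \<in> R" "t \<in> R" "x \<in> R'" "y \<in> R'" for s t x y
      proof -
        have U0: "0 \<le> U" using wL[of s x] wU[of s x] that L0 by linarith
        have w0: "0 \<le> w \<tau> t y" using wL[of t y] that L0 by linarith
        have "w \<tau> s x * w \<tau> t y \<le> U * U"
          using wU[of s x] wU[of t y] that U0 w0 by (intro mult_mono) auto
        hence "c * (w \<tau> s x * w \<tau> t y) \<le> c * (U * U)" using c0 by (rule mult_left_mono)
        also have "\<dots> = L * L" using cUL by (simp add: power2_eq_square)
        also have "\<dots> \<le> w \<tau> s y * w \<tau> t x"
          using wL[of s y] wL[of t x] that L0 by (intro mult_mono) auto
        finally show ?thesis .
      qed
      have cb: "k * (\<Sum>\<pi>\<in>Br. \<Prod>s\<in>R. w \<tau> s (\<pi> s)) \<le> (\<Sum>\<pi>\<in>B. \<Prod>s\<in>R. w \<tau> s (\<pi> s))"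
        unfolding k_def Br_def B_def
        by (rule comb_bound[OF finR finR' r r' _ c0 key]) (auto simp: w_def)
      have pT0: "0 \<le> pT \<tau> * (1 / real N)" unfolding pT_def by simp
      have "k * (\<Sum>\<pi>\<in>Br. G \<tau> \<pi>) = pT \<tau> * (1 / real N) * (k * (\<Sum>\<pi>\<in>Br. \<Prod>s\<in>R. w \<tau> s (\<pi> s)))"
        using fact[OF \<tau>] by (simp add: sum_distrib_left Br_def algebra_simps)
      also have "\<dots> \<le> pT \<tau> * (1 / real N) * (\<Sum>\<pi>\<in>B. \<Prod>s\<in>R. w \<tau> s (\<pi> s))"
        using cb pT0 by (rule mult_left_mono)
      also have "\<dots> = (\<Sum>\<pi>\<in>B. G \<tau> \<pi>)"
        using fact[OF \<tau>] by (simp add: sum_distrib_left)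
      finally show ?thesis .
    qed
    define nu where "nu = measure_pmf.prob P {\<omega>. Perm \<omega> r = r' \<and> T' \<omega> = \<tau>'}"
    define de where "de = measure_pmf.prob P {\<omega>. T' \<omega> = \<tau>'}"
    have "k * nu \<le> de"
    proof -
      have "k * nu = (\<Sum>\<tau>\<in>tables R A V. k * (\<Sum>\<pi>\<in>Br. G \<tau> \<pi>))"
        unfolding nu_def num by (rule sum_distrib_left)
      also have "\<dots> \<le> (\<Sum>\<tau>\<in>tables R A V. \<Sum>\<pi>\<in>B. G \<tau> \<pi>)"
        by (rule sum_mono) (rule per\<tau>)
      finally show ?thesis unfolding de_def den .
    qed
    moreover have "0 \<le> nu" unfolding nu_def by simp
    ultimately have kd: "k * nu \<le> de" "0 \<le> nu" by auto
    have "nu / de \<le> 1 / k"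
    proof (cases "de = 0")
      case True thus ?thesis using k1 by simp
    next
      case False
      have "0 \<le> k * nu" using kd(2) k1 by simp
      hence dp: "de > 0" using kd(1) False by linarith
      have "nu \<le> de / k" using kd(1) k1 by (simp add: field_simps)
      thus ?thesis using dp k1 by (simp add: divide_le_eq field_simps)
    qed
    thus "measure_pmf.prob P {\<omega>. Perm \<omega> r = r' \<and> T' \<omega> = \<tau>'} / measure_pmf.prob P {\<omega>. T' \<omega> = \<tau>'} \<le> 1 / k"
      unfolding nu_def de_def .
  qed
qed

end
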